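(* Let $A$ be a $C^*$-algebra and $I\subseteq A$ a closed two-sided ideal. Then $A$ is nowhere scattered if and only if both $I$ and $A/I$ are nowhere scattered.
   Context: A minimal open projection in a $C^*$-algebra $B$ is a nonzero projection $p\in B$ with $pBp=\mathbb{C}p$. A $C^*$-algebra is nowhere scattered if none of its quotients (by closed two-sided ideals) contains a minimal open projection. *)

theory Defs
  imports "HOL-Analysis.Analysis"
begin

text \<open>Abstract (not necessarily unital) complex C*-algebras: a real Banach algebra
with a compatible complex scalar multiplication and an involution satisfying the
C*-identity.\<close>

class cstar_algebra = real_normed_algebra + banach +
  fixes cscale :: "complex \<Rightarrow> 'a \<Rightarrow> 'a"
    and adj :: "'a \<Rightarrow> 'a"
  assumes cscale_of_real: "cscale (complex_of_real r) x = scaleR r x"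
    and cscale_add_right: "cscale c (x + y) = cscale c x + cscale c y"
    and cscale_add_left: "cscale (c + d) x = cscale c x + cscale d x"
    and cscale_cscale: "cscale c (cscale d x) = cscale (c * d) x"
    and cscale_mult_left: "cscale c x * y = cscale c (x * y)"
    and cscale_mult_right: "x * cscale c y = cscale c (x * y)"
    and norm_cscale: "norm (cscale c x) = cmod c * norm x"
    and adj_adj: "adj (adj x) = x"
    and adj_add: "adj (x + y) = adj x + adj y"
    and adj_cscale: "adj (cscale c x) = cscale (cnj c) (adj x)"
    and adj_mult: "adj (x * y) = adj y * adj x"
    and cstar_identity: "norm (adj x * x) = (norm x)\<^sup>2"

definition closed_ideal :: "'a::cstar_algebra set \<Rightarrow> 'a set \<Rightarrow> bool" where
  "closed_ideal S J \<longleftrightarrow> J \<subseteq> S \<and> closed J \<and> 0 \<in> J \<and>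
     (\<forall>x\<in>J. \<forall>y\<in>J. x + y \<in> J) \<and> (\<forall>c. \<forall>x\<in>J. cscale c x \<in> J) \<and>
     (\<forall>a\<in>S. \<forall>x\<in>J. a * x \<in> J \<and> x * a \<in> J)"

text \<open>The quotient S/J contains a minimal open projection, written out on coset
representatives: some class p+J is a nonzero projection with
(p+J)(S/J)(p+J) = C(p+J).\<close>
definition quotient_has_min_proj :: "'a::cstar_algebra set \<Rightarrow> 'a set \<Rightarrow> bool" where
  "quotient_has_min_proj S J \<longleftrightarrow> (\<exists>p\<in>S. p \<notin> J \<and> adj p - p \<in> J \<and> p * p - p \<in> J \<and>
     (\<forall>b\<in>S. \<exists>c. p * b * p - cscale c p \<in> J) \<and>
     (\<forall>c. \<exists>b\<in>S. p * b * p - cscale c p \<in> J))"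

text \<open>The quotient C*-algebra S/K is nowhere scattered.  Closed ideals of S/K are
identified with closed ideals J of S containing K (correspondence theorem), and
(S/K)/(J/K) with S/J.\<close>
definition nowhere_scattered_quotient :: "'a::cstar_algebra set \<Rightarrow> 'a set \<Rightarrow> bool" where
  "nowhere_scattered_quotient S K \<longleftrightarrow>
     (\<forall>J. closed_ideal S J \<and> K \<subseteq> J \<longrightarrow> \<not> quotient_has_min_proj S J)"

definition nowhere_scattered :: "'a::cstar_algebra set \<Rightarrow> bool" where
  "nowhere_scattered S \<longleftrightarrow>
     (\<forall>J. closed_ideal S J \<longrightarrow> \<not> quotient_has_min_proj S J)"

end

theory Submission
  imports Defs
begin




lemma cscale_zero_left[simp]: "cscale 0 (x::'a::cstar_algebra) = 0"
  using cscale_of_real[of 0 x] by simp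

lemma cscale_one[simp]: "cscale 1 (x::'a::cstar_algebra) = x"
  using cscale_of_real[of 1 x] by simp

lemma cscale_zero_right[simp]: "cscale c (0::'a::cstar_algebra) = 0"
  using cscale_add_right[of c 0 0] by simp

lemma cscale_minus_right: "cscale c (- (x::'a::cstar_algebra)) = - cscale c x"
  using minus_unique[of "cscale c x" "cscale c (-x)"] cscale_add_right[of c x "-x"] by simp

lemma cscale_diff_right: "cscale c ((x::'a::cstar_algebra) - y) = cscale c x - cscale c y"
  using cscale_add_right[of c x "-y"] cscale_minus_right by simp

lemma cscale_minus_left: "cscale (- c) (x::'a::cstar_algebra) = - cscale c x"
  using minus_unique[of "cscale c x" "cscale (-c) x"] cscale_add_left[of c "-c" x] by simp

lemma cscale_diff_left: "cscale (c - d) (x::'a::cstar_algebra) = cscale c x - cscale d x"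
  using cscale_add_left[of c "-d" x] cscale_minus_left by simp

lemma adj_zero[simp]: "adj (0::'a::cstar_algebra) = 0"
  using adj_add[of 0 0] by simp

lemma adj_minus: "adj (- (x::'a::cstar_algebra)) = - adj x"
  using minus_unique[of "adj x" "adj (-x)"] adj_add[of x "-x"] by simp

lemma adj_diff: "adj ((x::'a::cstar_algebra) - y) = adj x - adj y"
  using adj_add[of x "-y"] adj_minus by simp

lemma ci_zero: "closed_ideal S J \<Longrightarrow> 0 \<in> J"
  by (simp add: closed_ideal_def)
lemma ci_add: "closed_ideal S J \<Longrightarrow> x \<in> J \<Longrightarrow> y \<in> J \<Longrightarrow> x + y \<in> J"
  by (simp add: closed_ideal_def)
lemma ci_cscale: "closed_ideal S J \<Longrightarrow> x \<in> J \<Longrightarrow> cscale c x \<in> J"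
  by (simp add: closed_ideal_def)
lemma ci_minus: "closed_ideal S J \<Longrightarrow> x \<in> J \<Longrightarrow> - x \<in> J"
  using ci_cscale[of S J x "-1"] by (simp add: cscale_minus_left)
lemma ci_diff: "closed_ideal S J \<Longrightarrow> x \<in> J \<Longrightarrow> y \<in> J \<Longrightarrow> x - y \<in> J"
  using ci_add[of S J x "-y"] ci_minus[of S J y] by simp
lemma ci_multL: "closed_ideal S J \<Longrightarrow> a \<in> S \<Longrightarrow> x \<in> J \<Longrightarrow> a * x \<in> J"
  by (simp add: closed_ideal_def)
lemma ci_multR: "closed_ideal S J \<Longrightarrow> a \<in> S \<Longrightarrow> x \<in> J \<Longrightarrow> x * a \<in> J"
  by (simp add: closed_ideal_def)
lemma ci_closed: "closed_ideal S J \<Longrightarrow> closed J"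
  by (simp add: closed_ideal_def)
lemma ci_sub: "closed_ideal S J \<Longrightarrow> J \<subseteq> S"
  by (simp add: closed_ideal_def)




fun pw :: "nat \<Rightarrow> 'a::cstar_algebra \<Rightarrow> 'a" where
  "pw 0 x = x" | "pw (Suc n) x = pw n x * x"

lemma pw_norm: "norm (pw n x) \<le> norm x ^ Suc n"
proof (induction n)
  case 0 then show ?case by simp
next
  case (Suc n)
  have "norm (pw (Suc n) x) \<le> norm (pw n x) * norm x" by (simp add: norm_mult_ineq)
  also have "\<dots> \<le> norm x ^ Suc n * norm x" using Suc by (simp add: mult_right_mono)
  finally show ?case by (simp add: mult.commute)
qed

lemma lemK:
  fixes p x :: "'a::cstar_algebra"
  assumes J: "closed_ideal UNIV J" and pJ: "p \<notin> J" and pp: "p*p - p \<in> J"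
    and x: "x - cscale \<mu> p \<in> J" and lt: "norm x < cmod \<mu>"
  shows False
proof -
  have mu0: "\<mu> \<noteq> 0" using lt norm_ge_zero[of x] by auto
  have cong: "pw n x - cscale (\<mu>^Suc n) p \<in> J" for n
  proof (induction n)
    case 0 then show ?case using x by simp
  next
    case (Suc n)
    have eq: "pw (Suc n) x - cscale (\<mu>^Suc (Suc n)) p =
      (pw n x - cscale (\<mu>^Suc n) p) * x + cscale (\<mu>^Suc n) (p * (x - cscale \<mu> p) + cscale \<mu> (p*p - p))"
      by (simp add: algebra_simps cscale_diff_right cscale_add_right cscale_cscale cscale_mult_left cscale_mult_right)
    have "(pw n x - cscale (\<mu>^Suc n) p) * x \<in> J" using Suc ci_multR[OF J] by simp
    moreover have "p * (x - cscale \<mu> p) \<in> J" using x ci_multL[OF J] by simp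
    moreover have "cscale \<mu> (p*p - p) \<in> J" using pp ci_cscale[OF J] by simp
    ultimately show ?case unfolding eq using ci_add[OF J] ci_cscale[OF J] by metis
  qed
  define f where "f n = p - cscale (inverse (\<mu>^Suc n)) (pw n x)" for n
  have fJ: "f n \<in> J" for n
  proof -
    have c1: "inverse (\<mu>^Suc n) * \<mu>^Suc n = 1" using mu0 by (intro left_inverse power_not_zero)
    have c2: "cscale (inverse (\<mu>^Suc n)) (cscale (\<mu>^Suc n) p) = p"
      by (simp only: cscale_cscale c1 cscale_one)
    have "f n = - cscale (inverse (\<mu>^Suc n)) (pw n x - cscale (\<mu>^Suc n) p)"
      unfolding f_def cscale_diff_right c2 by simp
    then show ?thesis using cong ci_minus[OF J] ci_cscale[OF J] by metis
  qed
  define r where "r = norm x / cmod \<mu>"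
  have r0: "0 \<le> r" "r < 1" using lt mu0 by (auto simp: r_def)
  have bound: "norm (p - f n) \<le> r ^ Suc n" for n
  proof -
    have "norm (p - f n) = norm (pw n x) / cmod \<mu> ^ Suc n"
      by (simp add: f_def norm_cscale norm_inverse norm_power norm_mult divide_inverse mult.commute)
    also have "\<dots> \<le> norm x ^ Suc n / cmod \<mu> ^ Suc n"
      using pw_norm[of n x] by (simp add: divide_right_mono)
    also have "\<dots> = r ^ Suc n" by (simp add: r_def power_divide)
    finally show ?thesis .
  qed
  have "(\<lambda>n. r ^ Suc n) \<longlonglongrightarrow> 0"
    using tendsto_mult_right_zero[OF LIMSEQ_power_zero[of r], of r] r0 by simp
  then have "(\<lambda>n. p - f n) \<longlonglongrightarrow> 0"
    by (rule Lim_null_comparison[rotated]) (use bound in \<open>simp del: power_Suc\<close>)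
  then have "(\<lambda>n. p - (p - f n)) \<longlonglongrightarrow> p - 0"
    by (intro tendsto_diff tendsto_const)
  then have "f \<longlonglongrightarrow> p" by simp
  then have "p \<in> J" using closed_sequentially[OF ci_closed[OF J]] fJ by blast
  then show False using pJ by simp
qed




fun Qf :: "'a::cstar_algebra \<Rightarrow> complex \<Rightarrow> nat \<Rightarrow> 'a" where
  "Qf y z 0 = y" | "Qf y z (Suc m) = Qf y z m * y + cscale z (Qf y z m)"

fun Wf :: "'a::cstar_algebra \<Rightarrow> real \<Rightarrow> nat \<Rightarrow> 'a" where
  "Wf y s 0 = y * y" | "Wf y s (Suc m) = y * Wf y s m * y + scaleR (s^2) (Wf y s m)"

lemma QW:
  fixes y :: "'a::cstar_algebra"
  assumes ya: "adj y = y"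
  shows "adj (Qf y (\<i> * complex_of_real s) m) * Qf y (\<i> * complex_of_real s) m = Wf y s m
         \<and> y * Wf y s m = Wf y s m * y"
proof (induction m)
  case 0 then show ?case using ya by (simp add: adj_mult mult.assoc)
next
  case (Suc m)
  define z where "z = \<i> * complex_of_real s"
  define Q where "Q = Qf y z m"
  define W where "W = Wf y s m"
  have IH1: "adj Q * Q = W" and IH2: "y * W = W * y" using Suc by (simp_all add: Q_def W_def z_def)
  have cz: "cnj z = - z" by (simp add: z_def)
  have zz: "- (z * z) = complex_of_real (s^2)" by (simp add: z_def power2_eq_square algebra_simps)
  have aQ: "adj (Qf y z (Suc m)) = y * adj Q + cscale (- z) (adj Q)"
    by (simp add: Q_def adj_add adj_mult adj_cscale ya cz)
  have "adj (Qf y z (Suc m)) * Qf y z (Suc m) = (y * adj Q + cscale (- z) (adj Q)) * (Q * y + cscale z Q)"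
    unfolding aQ by (simp add: Q_def)
  also have "\<dots> = y * (adj Q * Q) * y + cscale z (y * (adj Q * Q)) - cscale z ((adj Q * Q) * y)
      + cscale (- z * z) (adj Q * Q)"
    by (simp add: algebra_simps cscale_mult_left cscale_mult_right cscale_cscale cscale_minus_left cscale_diff_right cscale_add_right)
  also have "\<dots> = y * W * y + scaleR (s^2) W"
    using cscale_of_real[of "s^2" W] by (simp add: IH1 IH2 zz)
  finally have e1: "adj (Qf y z (Suc m)) * Qf y z (Suc m) = Wf y s (Suc m)" by (simp add: W_def)
  have "y * Wf y s (Suc m) = y * (y * W * y) + scaleR (s^2) (y * W)" by (simp add: W_def algebra_simps)
  also have "\<dots> = (y * W * y) * y + scaleR (s^2) (W * y)"
    by (simp add: IH2 mult.assoc[symmetric])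
  also have "\<dots> = Wf y s (Suc m) * y" by (simp add: W_def algebra_simps)
  finally show ?case using e1 by (simp add: z_def)
qed

lemma W_norm: "norm (Wf y s m) \<le> norm y ^ 2 * (norm y ^ 2 + s^2) ^ m"
proof (induction m)
  case 0 then show ?case by (simp add: norm_mult_ineq power2_eq_square)
next
  case (Suc m)
  have "norm (Wf y s (Suc m)) \<le> norm (y * Wf y s m * y) + norm (scaleR (s^2) (Wf y s m))"
    using norm_triangle_ineq[of "y * Wf y s m * y" "scaleR (s^2) (Wf y s m)"] by simp
  also have "\<dots> \<le> norm y * norm (Wf y s m) * norm y + s^2 * norm (Wf y s m)"
  proof -
    have "norm (y * Wf y s m * y) \<le> norm (y * Wf y s m) * norm y" by (rule norm_mult_ineq)
    also have "\<dots> \<le> norm y * norm (Wf y s m) * norm y"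
      by (intro mult_right_mono norm_mult_ineq) simp
    finally show ?thesis by simp
  qed
  also have "\<dots> = (norm y ^ 2 + s^2) * norm (Wf y s m)" by (simp add: algebra_simps power2_eq_square)
  also have "\<dots> \<le> (norm y ^ 2 + s^2) * (norm y ^ 2 * (norm y ^ 2 + s^2) ^ m)"
    using Suc by (intro mult_left_mono) auto
  finally show ?case by (simp add: algebra_simps)
qed


lemma Q_cong:
  fixes p y :: "'a::cstar_algebra"
  assumes J: "closed_ideal UNIV J"
    and yJ: "y - cscale la p \<in> J" and pyJ: "p * y - cscale la p \<in> J"
  shows "Qf y z m - cscale (la * (la + z)^m) p \<in> J"
proof (induction m)
  case 0 then show ?case using yJ by simp
next
  case (Suc m)
  define \<mu> where "\<mu> = la * (la + z)^m"
  have eq: "Qf y z (Suc m) - cscale (la * (la + z)^Suc m) p =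
     (Qf y z m - cscale \<mu> p) * y + cscale \<mu> (p * y - cscale la p) + cscale z (Qf y z m - cscale \<mu> p)"
    by (simp add: \<mu>_def algebra_simps cscale_mult_left cscale_mult_right cscale_cscale
        cscale_diff_right cscale_add_right cscale_add_left)
  have "(Qf y z m - cscale \<mu> p) * y \<in> J" using Suc ci_multR[OF J] by (simp add: \<mu>_def)
  moreover have "cscale \<mu> (p * y - cscale la p) \<in> J" using pyJ ci_cscale[OF J] by simp
  moreover have "cscale z (Qf y z m - cscale \<mu> p) \<in> J" using Suc ci_cscale[OF J] by (simp add: \<mu>_def)
  ultimately show ?case unfolding eq using ci_add[OF J] by metis
qed

lemma pow_bound:
  fixes a b c d :: real
  assumes "\<And>m. a * c ^ m \<le> b * d ^ m" and "a > 0" and "d \<ge> 0"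
  shows "c \<le> d"
proof (rule ccontr)
  assume "\<not> c \<le> d"
  then have cd: "c > d" by simp
  show False
  proof (cases "d = 0")
    case True
    then have "a * c ^ 1 \<le> 0" using assms(1)[of 1] by simp
    moreover have "a * c > 0" using cd True \<open>a > 0\<close> by simp
    ultimately show False by simp
  next
    case False
    then have d0: "d > 0" using assms(3) by simp
    have "1 < c / d" using cd d0 by simp
    then obtain n where n: "b / a < (c / d) ^ n" using real_arch_pow by blast
    have "a * c ^ n \<le> b * d ^ n" by (rule assms(1))
    then have "(c / d) ^ n \<le> b / a" using d0 \<open>a > 0\<close>
      by (simp add: power_divide divide_le_eq le_divide_eq mult.commute)
    then show False using n by simp
  qed
qed

lemma lemR:
  fixes p h :: "'a::cstar_algebra"
  assumes J: "closed_ideal UNIV J" and pJ: "p \<notin> J" and pa: "adj p - p \<in> J"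
    and pp: "p * p - p \<in> J" and ha: "adj h = h" and ph: "p * h * p - cscale la p \<in> J"
  shows "Im la = 0"
proof (rule ccontr)
  assume nz: "Im la \<noteq> 0"
  then have l0: "la \<noteq> 0" by auto
  define y where "y = adj p * h * p"
  have ya: "adj y = y" by (simp add: y_def adj_mult adj_adj ha mult.assoc)
  have yJ: "y - cscale la p \<in> J"
  proof -
    have e: "y - cscale la p = (adj p - p) * (h * p) + (p * h * p - cscale la p)"
      by (simp add: y_def algebra_simps)
    have "(adj p - p) * (h * p) \<in> J" using ci_multR[OF J] pa by simp
    then show ?thesis unfolding e using ci_add[OF J _ ph] by blast
  qed
  have pyJ: "p * y - cscale la p \<in> J"
  proof -
    have e: "p * y - cscale la p = p * ((adj p - p) * (h * p)) + (p * p - p) * (h * p) + (p * h * p - cscale la p)"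
      by (simp add: y_def algebra_simps)
    have "p * ((adj p - p) * (h * p)) \<in> J" using ci_multL[OF J] ci_multR[OF J] pa by simp
    moreover have "(p * p - p) * (h * p) \<in> J" using ci_multR[OF J] pp by simp
    ultimately show ?thesis unfolding e using ci_add[OF J] ph by blast
  qed
  have main: "cmod (la + \<i> * complex_of_real s) ^ 2 \<le> norm y ^ 2 + s ^ 2" for s
  proof -
    define z where "z = \<i> * complex_of_real s"
    have ineq: "cmod la ^ 2 * (cmod (la + z) ^ 2) ^ m \<le> norm y ^ 2 * (norm y ^ 2 + s^2) ^ m" for m
    proof -
      have c: "Qf y z m - cscale (la * (la + z)^m) p \<in> J" by (rule Q_cong[OF J yJ pyJ])
      have "\<not> norm (Qf y z m) < cmod (la * (la + z)^m)"
        using lemK[OF J pJ pp c] by blast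
      then have "cmod (la * (la + z)^m) \<le> norm (Qf y z m)" by simp
      then have "cmod (la * (la + z)^m) ^ 2 \<le> norm (Qf y z m) ^ 2"
        by (intro power_mono) auto
      also have "\<dots> = norm (Wf y s m)"
        using QW[OF ya, of s m] cstar_identity[of "Qf y z m"] by (simp add: z_def)
      also have "\<dots> \<le> norm y ^ 2 * (norm y ^ 2 + s^2) ^ m" by (rule W_norm)
      finally show ?thesis by (simp add: norm_mult norm_power power_mult_distrib power_mult[symmetric] mult.commute)
    qed
    have "cmod (la + z) ^ 2 \<le> norm y ^ 2 + s^2"
      by (rule pow_bound[OF ineq]) (use l0 in auto)
    then show ?thesis by (simp add: z_def)
  qed
  define s where "s = (norm y ^ 2 + 1) / (2 * Im la)"
  have "cmod (la + \<i> * complex_of_real s) ^ 2 = Re la ^ 2 + (Im la + s) ^ 2"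
    by (simp add: cmod_power2)
  also have "\<dots> = Re la ^ 2 + Im la ^ 2 + (norm y ^ 2 + 1) + s^2"
    using nz by (simp add: s_def power2_eq_square field_simps)
  finally have "Re la ^ 2 + Im la ^ 2 + (norm y ^ 2 + 1) + s^2 \<le> norm y ^ 2 + s^2"
    using main[of s] by simp
  then show False by (smt (verit) zero_le_power2)
qed




lemma uniq:
  fixes p x :: "'a::cstar_algebra"
  assumes J: "closed_ideal UNIV J" and pJ: "p \<notin> J"
    and "x - cscale c p \<in> J" and "x - cscale d p \<in> J"
  shows "c = d"
proof (rule ccontr)
  assume cd: "c \<noteq> d"
  have "(x - cscale d p) - (x - cscale c p) \<in> J" using assms ci_diff[OF J] by blast
  then have "cscale (c - d) p \<in> J" by (simp add: cscale_diff_left)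
  then have "cscale (inverse (c - d)) (cscale (c - d) p) \<in> J" using ci_cscale[OF J] by blast
  then have "p \<in> J" using cd by (simp add: cscale_cscale)
  then show False using pJ by simp
qed

lemma phi_adj:
  fixes p b :: "'a::cstar_algebra"
  assumes J: "closed_ideal UNIV J" and pJ: "p \<notin> J" and pa: "adj p - p \<in> J"
    and pp: "p * p - p \<in> J" and allb: "\<forall>b. \<exists>c. p * b * p - cscale c p \<in> J"
    and bc: "p * b * p - cscale c p \<in> J"
  shows "p * adj b * p - cscale (cnj c) p \<in> J"
proof -
  obtain d where bd: "p * adj b * p - cscale d p \<in> J" using allb by blast
  have e1: "p * (b + adj b) * p - cscale (c + d) p = (p * b * p - cscale c p) + (p * adj b * p - cscale d p)"
    by (simp add: algebra_simps cscale_add_left)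
  have h1: "p * (b + adj b) * p - cscale (c + d) p \<in> J" unfolding e1 using ci_add[OF J bc bd] .
  have a1: "adj (b + adj b) = b + adj b" by (simp add: adj_add adj_adj add.commute)
  have i1: "Im (c + d) = 0" by (rule lemR[OF J pJ pa pp a1 h1])
  have e2: "p * cscale \<i> (b - adj b) * p - cscale (\<i> * (c - d)) p
      = cscale \<i> ((p * b * p - cscale c p) - (p * adj b * p - cscale d p))"
    by (simp add: algebra_simps cscale_mult_left cscale_mult_right cscale_diff_right cscale_diff_left cscale_cscale cscale_add_right)
  have "(p * b * p - cscale c p) - (p * adj b * p - cscale d p) \<in> J" using ci_diff[OF J bc bd] .
  then have h2: "p * cscale \<i> (b - adj b) * p - cscale (\<i> * (c - d)) p \<in> J"
    unfolding e2 using ci_cscale[OF J] by blast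
  have a2: "adj (cscale \<i> (b - adj b)) = cscale \<i> (b - adj b)"
    by (simp add: adj_cscale adj_diff adj_adj cscale_diff_right cscale_minus_left)
  have i2: "Im (\<i> * (c - d)) = 0" by (rule lemR[OF J pJ pa pp a2 h2])
  have "d = cnj c" using i1 i2 by (simp add: complex_eq_iff)
  then show ?thesis using bd by simp
qed




lemma ppp:
  fixes p :: "'a::cstar_algebra"
  assumes J: "closed_ideal S J" and pS: "p \<in> S" and pp: "p * p - p \<in> J"
  shows "p * p * p - p \<in> J"
proof -
  have e: "p * p * p - p = p * (p * p - p) + (p * p - p)" by (simp add: algebra_simps)
  show ?thesis unfolding e using ci_add[OF J ci_multL[OF J pS pp] pp] .
qed

lemma ppp_notin:
  fixes p :: "'a::cstar_algebra"
  assumes J: "closed_ideal S J" and pS: "p \<in> S" and pp: "p * p - p \<in> J" and pJ: "p \<notin> J"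
  shows "p * p * p \<notin> J"
proof
  assume "p * p * p \<in> J"
  then have "p * p * p - (p * p * p - p) \<in> J" using ci_diff[OF J _ ppp[OF J pS pp]] by blast
  then show False using pJ by simp
qed

lemma transfer:
  fixes p :: "'a::cstar_algebra"
  assumes L: "closed_ideal UNIV L" and pL: "p \<notin> L" and pa: "adj p - p \<in> L"
    and pp: "p * p - p \<in> L" and allb: "\<forall>b. \<exists>c. p * b * p - cscale c p \<in> L"
  shows "quotient_has_min_proj UNIV L"
proof -
  have allc: "\<exists>b\<in>UNIV. p * b * p - cscale c p \<in> L" for c
  proof -
    have "p * cscale c p * p - cscale c p = cscale c (p * p * p - p)"
      by (simp add: cscale_mult_left cscale_mult_right cscale_diff_right)
    moreover have "cscale c (p * p * p - p) \<in> L" using ci_cscale[OF L ppp[OF L _ pp]] by simp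
    ultimately show ?thesis by (intro bexI[of _ "cscale c p"]) auto
  qed
  show ?thesis unfolding quotient_has_min_proj_def
    using pL pa pp allb allc by blast
qed

lemma closed_mult3: "closed {a::'a::cstar_algebra. x * a * y \<in> J}" if "closed J"
proof -
  have "continuous_on UNIV (\<lambda>a::'a. x * a * y)" by (intro continuous_intros)
  from closed_vimage[OF that this] show ?thesis by (simp add: vimage_def)
qed




lemma fwd_I:
  fixes I :: "'a::cstar_algebra set"
  assumes I: "closed_ideal UNIV I" and ns: "nowhere_scattered (UNIV :: 'a set)"
  shows "nowhere_scattered I"
  unfolding nowhere_scattered_def
proof (intro allI impI notI)
  fix J assume JI: "closed_ideal I J" and q: "quotient_has_min_proj I J"
  from q obtain p where pI: "p \<in> I" and pJ: "p \<notin> J" and pa: "adj p - p \<in> J"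
    and pp: "p * p - p \<in> J" and allb: "\<forall>b\<in>I. \<exists>c. p * b * p - cscale c p \<in> J"
    unfolding quotient_has_min_proj_def by blast
  have JsubI: "J \<subseteq> I" using ci_sub[OF JI] .
  define K where "K = {a. \<forall>x\<in>I. \<forall>y\<in>I. x * a * y \<in> J}"
  have Keq: "K = (\<Inter>x\<in>I. \<Inter>y\<in>I. {a. x * a * y \<in> J})" by (auto simp: K_def)
  have Kc: "closed K" unfolding Keq using closed_mult3[OF ci_closed[OF JI]] by (intro closed_INT) auto
  have K: "closed_ideal UNIV K"
    unfolding closed_ideal_def
  proof (intro conjI ballI allI)
    show "K \<subseteq> UNIV" by simp
    show "closed K" by (rule Kc)
    show "0 \<in> K" using ci_zero[OF JI] by (simp add: K_def)
  next
    fix a b assume "a \<in> K" "b \<in> K"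
    then show "a + b \<in> K" using ci_add[OF JI] by (simp add: K_def algebra_simps)
  next
    fix c a assume "a \<in> K"
    then show "cscale c a \<in> K" using ci_cscale[OF JI]
      by (simp add: K_def cscale_mult_left cscale_mult_right)
  next
    fix a k assume k: "k \<in> K"
    show "a * k \<in> K" unfolding K_def
    proof (intro CollectI ballI)
      fix x y assume "x \<in> I" "y \<in> I"
      then have "x * a \<in> I" using ci_multR[OF I] by simp
      then have "(x * a) * k * y \<in> J" using k \<open>y \<in> I\<close> by (simp add: K_def)
      then show "x * (a * k) * y \<in> J" by (simp add: mult.assoc)
    qed
    show "k * a \<in> K" unfolding K_def
    proof (intro CollectI ballI)
      fix x y assume "x \<in> I" "y \<in> I"
      then have "a * y \<in> I" using ci_multL[OF I] by simp
      then have "x * k * (a * y) \<in> J" using k \<open>x \<in> I\<close> by (simp add: K_def)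
      then show "x * (k * a) * y \<in> J" by (simp add: mult.assoc)
    qed
  qed
  have JK: "J \<subseteq> K"
  proof
    fix j assume j: "j \<in> J"
    show "j \<in> K" unfolding K_def
    proof (intro CollectI ballI)
      fix x y assume "x \<in> I" "y \<in> I"
      then show "x * j * y \<in> J" using ci_multL[OF JI] ci_multR[OF JI] j by simp
    qed
  qed
  have pK: "p \<notin> K"
  proof
    assume "p \<in> K"
    then have "p * p * p \<in> J" using pI by (simp add: K_def)
    then show False using ppp_notin[OF JI pI pp pJ] by simp
  qed
  have allbK: "\<forall>b. \<exists>c. p * b * p - cscale c p \<in> K"
  proof
    fix b
    have pbp: "p * b * p \<in> I" using pI ci_multL[OF I] ci_multR[OF I] by simp
    obtain c where c: "p * (p * b * p) * p - cscale c p \<in> J" using allb pbp by blast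
    have e: "p * b * p - cscale c p = (- (p * p - p)) * (b * p) + (p * p * b) * (- (p * p - p))
        + (p * (p * b * p) * p - cscale c p)"
      by (simp add: algebra_simps)
    have m1: "- (p * p - p) \<in> J" using ci_minus[OF JI pp] .
    have bp: "b * p \<in> I" "p * p * b \<in> I" using pI ci_multL[OF I] ci_multR[OF I] by simp_all
    have "p * b * p - cscale c p \<in> J"
      unfolding e using ci_add[OF JI] ci_multR[OF JI bp(1) m1] ci_multL[OF JI bp(2) m1] c by blast
    then show "\<exists>c. p * b * p - cscale c p \<in> K" using JK by blast
  qed
  have "quotient_has_min_proj UNIV K"
    by (rule transfer[OF K pK]) (use JK pa pp allbK in auto)
  then show False using ns K unfolding nowhere_scattered_def by blast
qed

lemma fwd_Q:
  fixes I :: "'a::cstar_algebra set"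
  assumes ns: "nowhere_scattered (UNIV :: 'a set)"
  shows "nowhere_scattered_quotient UNIV I"
  using ns unfolding nowhere_scattered_def nowhere_scattered_quotient_def by blast




lemma bwd:
  fixes I :: "'a::cstar_algebra set"
  assumes I: "closed_ideal UNIV I" and nsI: "nowhere_scattered I"
    and nsQ: "nowhere_scattered_quotient UNIV I"
  shows "nowhere_scattered (UNIV :: 'a set)"
  unfolding nowhere_scattered_def
proof (intro allI impI notI)
  fix J :: "'a set" assume J: "closed_ideal UNIV J" and q: "quotient_has_min_proj UNIV J"
  from q obtain p where pJ: "p \<notin> J" and pa: "adj p - p \<in> J"
    and pp: "p * p - p \<in> J" and allb: "\<forall>b. \<exists>c. p * b * p - cscale c p \<in> J"
    unfolding quotient_has_min_proj_def by blast
  show False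
  proof (cases "\<exists>i\<in>I. p * i * p \<notin> J")
    case False
    then have B: "\<And>i. i \<in> I \<Longrightarrow> p * i * p \<in> J" by blast
    define L where "L = {a. p * a * p \<in> J \<and> (\<forall>x. p * x * a * p \<in> J) \<and> (\<forall>y. p * a * y * p \<in> J)
       \<and> (\<forall>x y. p * x * a * y * p \<in> J)}"
    have Jc: "closed J" using ci_closed[OF J] .
    have Leq: "L = {a. p * a * p \<in> J} \<inter> (\<Inter>x. {a. (p * x) * a * p \<in> J}) \<inter> (\<Inter>y. {a. p * a * (y * p) \<in> J})
       \<inter> (\<Inter>x. \<Inter>y. {a. (p * x) * a * (y * p) \<in> J})"
      by (auto simp: L_def mult.assoc)
    have Lc: "closed L" unfolding Leq using closed_mult3[OF Jc]
      by (intro closed_Int closed_INT) auto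
    have L: "closed_ideal UNIV L"
      unfolding closed_ideal_def
    proof (intro conjI ballI allI)
      show "L \<subseteq> UNIV" by simp
      show "closed L" by (rule Lc)
      show "0 \<in> L" using ci_zero[OF J] by (simp add: L_def)
    next
      fix a b assume "a \<in> L" "b \<in> L"
      then show "a + b \<in> L" using ci_add[OF J] by (simp add: L_def algebra_simps)
    next
      fix c a assume "a \<in> L"
      then show "cscale c a \<in> L" using ci_cscale[OF J]
        by (simp add: L_def cscale_mult_left cscale_mult_right)
    next
      fix a k assume k: "k \<in> L"
      have k1: "p * k * p \<in> J" and k2: "\<And>x. p * x * k * p \<in> J" and k3: "\<And>y. p * k * y * p \<in> J"
        and k4: "\<And>x y. p * x * k * y * p \<in> J" using k by (auto simp: L_def)
      show "a * k \<in> L" unfolding L_def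
        using k2[of a] k2[of "x * a" for x] k4[of a] k4[of "x * a" for x]
        by (simp add: mult.assoc)
      show "k * a \<in> L" unfolding L_def
        using k3[of a] k3[of "a * y" for y] k4[of _ a] k4[of _ "a * y" for y]
        by (simp add: mult.assoc)
    qed
    have IL: "I \<subseteq> L"
    proof
      fix i assume i: "i \<in> I"
      have "x * i \<in> I" "i * y \<in> I" "x * i * y \<in> I" for x y
        using i ci_multL[OF I] ci_multR[OF I] by simp_all
      then have "p * (x * i) * p \<in> J" "p * (i * y) * p \<in> J" "p * (x * i * y) * p \<in> J" for x y
        using B by blast+
      then show "i \<in> L" unfolding L_def using B[OF i] by (simp add: mult.assoc)
    qed
    have JL: "J \<subseteq> L"
    proof
      fix j assume j: "j \<in> J"
      have "a * j * b \<in> J" for a b using ci_multL[OF J] ci_multR[OF J] j by simp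
      then have "(p * x) * j * (y * p) \<in> J" "p * j * (y * p) \<in> J" "(p * x) * j * p \<in> J" for x y by blast+
      then show "j \<in> L" unfolding L_def using \<open>\<And>a b. a * j * b \<in> J\<close> by (simp add: mult.assoc)
    qed
    have pL: "p \<notin> L"
    proof
      assume "p \<in> L"
      then have "p * p * p \<in> J" by (simp add: L_def)
      then show False using ppp_notin[OF J _ pp pJ] by simp
    qed
    have "quotient_has_min_proj UNIV L"
      by (rule transfer[OF L pL]) (use JL pa pp allb in blast)+
    then show False using nsQ L IL unfolding nowhere_scattered_quotient_def by blast
  next
    case True
    then obtain i where iI: "i \<in> I" and ipJ: "p * i * p \<notin> J" by blast
    obtain c where c: "p * i * p - cscale c p \<in> J" using allb by blast
    have c0: "c \<noteq> 0" using c ipJ by auto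
    define w where "w = p * i * p"
    have wI: "w \<in> I" unfolding w_def using ci_multL[OF I _ iI] ci_multR[OF I] by simp
    have wc: "w - cscale c p \<in> J" using c by (simp add: w_def)
    have d: "p * adj i * p - cscale (cnj c) p \<in> J" by (rule phi_adj[OF J pJ pa pp allb c])
    have aw: "adj w - cscale (cnj c) p \<in> J"
    proof -
      have e: "adj w - cscale (cnj c) p = (adj p - p) * (adj i * adj p) + (p * adj i) * (adj p - p)
          + (p * adj i * p - cscale (cnj c) p)"
        by (simp add: w_def adj_mult algebra_simps)
      show ?thesis unfolding e using ci_add[OF J] ci_multR[OF J _ pa] ci_multL[OF J _ pa] d by blast
    qed
    define r where "r = cmod c ^ 2"
    have r0: "r > 0" using c0 by (simp add: r_def)
    have cc: "cnj c * c = complex_of_real r" using complex_norm_square[of c] by (simp add: r_def mult.commute)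
    have ww: "adj w * w - cscale (complex_of_real r) p \<in> J"
    proof -
      have e: "adj w * w - cscale (cnj c * c) p = (adj w - cscale (cnj c) p) * w
          + cscale (cnj c) (p * (w - cscale c p)) + cscale (cnj c * c) (p * p - p)"
        by (simp add: algebra_simps cscale_mult_left cscale_mult_right cscale_diff_right
            cscale_cscale cscale_add_right)
      have "(adj w - cscale (cnj c) p) * w \<in> J" using ci_multR[OF J _ aw] by simp
      moreover have "cscale (cnj c) (p * (w - cscale c p)) \<in> J"
        using ci_cscale[OF J ci_multL[OF J _ wc]] by simp
      moreover have "cscale (cnj c * c) (p * p - p) \<in> J" using ci_cscale[OF J pp] by simp
      ultimately show ?thesis using ci_add[OF J] e cc by metis
    qed
    define q where "q = cscale (complex_of_real (1/r)) (adj w * w)"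
    have qI: "q \<in> I" unfolding q_def using ci_cscale[OF I ci_multL[OF I _ wI]] by simp
    have qa: "adj q = q" by (simp add: q_def adj_cscale adj_mult adj_adj)
    have qp: "q - p \<in> J"
    proof -
      have "cscale (complex_of_real (1/r)) (cscale (complex_of_real r) p) = p"
        using r0 by (simp add: cscale_cscale)
      then have "q - p = cscale (complex_of_real (1/r)) (adj w * w - cscale (complex_of_real r) p)"
        by (simp add: q_def cscale_diff_right)
      then show ?thesis using ci_cscale[OF J ww] by simp
    qed
    define J' where "J' = J \<inter> I"
    have J': "closed_ideal I J'"
      unfolding closed_ideal_def J'_def
    proof (intro conjI ballI allI)
      show "J \<inter> I \<subseteq> I" by simp
      show "closed (J \<inter> I)" using ci_closed[OF J] ci_closed[OF I] by (rule closed_Int)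
      show "0 \<in> J \<inter> I" using ci_zero[OF J] ci_zero[OF I] by simp
    next
      fix x y assume "x \<in> J \<inter> I" "y \<in> J \<inter> I"
      then show "x + y \<in> J \<inter> I" using ci_add[OF J] ci_add[OF I] by simp
    next
      fix c x assume "x \<in> J \<inter> I"
      then show "cscale c x \<in> J \<inter> I" using ci_cscale[OF J] ci_cscale[OF I] by simp
    next
      fix a x assume "a \<in> I" "x \<in> J \<inter> I"
      then show "a * x \<in> J \<inter> I" "x * a \<in> J \<inter> I"
        using ci_multL[OF J] ci_multR[OF J] ci_multL[OF I] ci_multR[OF I] by simp_all
    qed
    have qJ: "q \<notin> J"
    proof
      assume "q \<in> J"
      then have "q - (q - p) \<in> J" using ci_diff[OF J _ qp] by blast
      then show False using pJ by simp
    qed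
    have qq: "q * q - q \<in> J'"
    proof -
      have e: "q * q - q = (q - p) * q + p * (q - p) + (p * p - p) - (q - p)"
        by (simp add: algebra_simps)
      have m1: "(q - p) * q \<in> J" using ci_multR[OF J _ qp] by simp
      have m2: "p * (q - p) \<in> J" using ci_multL[OF J _ qp] by simp
      have "q * q - q \<in> J" unfolding e by (intro ci_diff[OF J] ci_add[OF J] m1 m2 pp qp)
      moreover have "q * q - q \<in> I" using ci_diff[OF I ci_multL[OF I _ qI] qI] by simp
      ultimately show ?thesis by (simp add: J'_def)
    qed
    have allbq: "\<exists>c'. q * b * q - cscale c' q \<in> J'" if bI: "b \<in> I" for b
    proof -
      obtain c' where c': "p * b * p - cscale c' p \<in> J" using allb by blast
      have e: "q * b * q - cscale c' q = (q - p) * (b * q) + (p * b) * (q - p)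
          + (p * b * p - cscale c' p) - cscale c' (q - p)"
        by (simp add: algebra_simps cscale_diff_right)
      have m1: "(q - p) * (b * q) \<in> J" using ci_multR[OF J _ qp] by simp
      have m2: "(p * b) * (q - p) \<in> J" using ci_multL[OF J _ qp] by simp
      have "q * b * q - cscale c' q \<in> J" unfolding e
        by (intro ci_diff[OF J] ci_add[OF J] m1 m2 c' ci_cscale[OF J qp])
      moreover have "q * b * q - cscale c' q \<in> I"
        using ci_diff[OF I ci_multL[OF I _ qI, of "q * b"] ci_cscale[OF I qI]] by simp
      ultimately show ?thesis by (auto simp: J'_def)
    qed
    have allcq: "\<exists>b\<in>I. q * b * q - cscale c' q \<in> J'" for c'
    proof -
      have "q * cscale c' q * q - cscale c' q = cscale c' (q * q * q - q)"
        by (simp add: cscale_mult_left cscale_mult_right cscale_diff_right)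
      moreover have "cscale c' (q * q * q - q) \<in> J'" using ci_cscale[OF J' ppp[OF J' qI qq]] .
      moreover have "cscale c' q \<in> I" using ci_cscale[OF I qI] .
      ultimately show ?thesis by metis
    qed
    have "quotient_has_min_proj I J'"
      unfolding quotient_has_min_proj_def
      using qI qJ qa qq allbq allcq ci_zero[OF J'] by (auto simp: J'_def)
    then show False using nsI J' unfolding nowhere_scattered_def by blast
  qed
qed



theorem mainTheorem4:
  fixes I :: "'a::cstar_algebra set"
  assumes "closed_ideal UNIV I"
  shows "nowhere_scattered (UNIV :: 'a set) \<longleftrightarrow>
           nowhere_scattered I \<and> nowhere_scattered_quotient (UNIV :: 'a set) I"
  using fwd_I[OF assms] fwd_Q bwd[OF assms] by blast

end
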